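(* The size $\gamma$ of the smallest string attractor satisfies the following lower bounds on its sensitivity (the alphabet being allowed to contain as many distinct characters as needed): substitutions: $\liminf_{n\to\infty}\mathsf{MS}_{\mathrm{sub}}(\gamma,n) \geq 2$, $\mathsf{AS}_{\mathrm{sub}}(\gamma,n) \geq \gamma-2$ and $\mathsf{AS}_{\mathrm{sub}}(\gamma,n)=\Omega(\sqrt{n})$; insertions: $\liminf_{n\to\infty}\mathsf{MS}_{\mathrm{ins}}(\gamma,n) \geq 2$, $\mathsf{AS}_{\mathrm{ins}}(\gamma,n) \geq \gamma-2$ and $\mathsf{AS}_{\mathrm{ins}}(\gamma,n)=\Omega(\sqrt{n})$; deletions: $\liminf_{n\to\infty}\mathsf{MS}_{\mathrm{del}}(\gamma,n) \geq 2$, $\mathsf{AS}_{\mathrm{del}}(\gamma,n) \geq \gamma-3$ and $\mathsf{AS}_{\mathrm{del}}(\gamma,n)=\Omega(\sqrt{n})$.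
   Context: Strings are finite sequences over an alphabet $\Sigma$; $\Sigma^n$ is the set of strings of length $n$; $\mathsf{ed}$ is the edit distance (single-character substitutions, insertions, deletions). For a measure $C$ on strings: $\mathsf{MS}_{\mathrm{sub}}(C,n)=\max_{T\in\Sigma^n}\{C(T')/C(T): T'\in\Sigma^n,\ \mathsf{ed}(T,T')=1\}$; $\mathsf{MS}_{\mathrm{ins}}$, $\mathsf{MS}_{\mathrm{del}}$ the same with $T'\in\Sigma^{n+1}$, resp. $\Sigma^{n-1}$; $\mathsf{AS}_{\ast}$ the same with $C(T')-C(T)$. A bound of the form "$\mathsf{AS}(\gamma,n)\ge \gamma-c$" means that there are strings $T$ (with $\gamma(T)$ arbitrarily large) and $T'$ with $\mathsf{ed}(T,T')=1$ of the relevant type such that $\gamma(T')-\gamma(T)\ge\gamma(T)-c$. A string attractor of $T$ is a set $\Gamma$ of positions of $T$ such that every substring of $T$ has an occurrence $T[i..j]$ with $\Gamma\cap[i,j]\neq\emptyset$; $\gamma(T)$ is the minimum size of a string attractor of $T$. *)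

theory Defs
  imports Complex_Main "HOL-Library.Extended_Real"
begin

fun ed :: "'a list \<Rightarrow> 'a list \<Rightarrow> nat" where
  "ed [] ys = length ys"
| "ed xs [] = length xs"
| "ed (x # xs) (y # ys) =
     min (min (ed xs (y # ys) + 1) (ed (x # xs) ys + 1))
         (ed xs ys + (if x = y then 0 else 1))"

definition is_string_attractor :: "'a list \<Rightarrow> nat set \<Rightarrow> bool" where
  "is_string_attractor T \<Gamma> \<longleftrightarrow>
     \<Gamma> \<subseteq> {..<length T} \<and>
     (\<forall>i j. i \<le> j \<and> j < length T \<longrightarrow>
        (\<exists>i'. i' + (j - i) < length T \<and>
              take (j - i + 1) (drop i' T) = take (j - i + 1) (drop i T) \<and>
              (\<exists>p\<in>\<Gamma>. i' \<le> p \<and> p \<le> i' + (j - i))))"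

definition gamma :: "'a list \<Rightarrow> nat" where
  "gamma T = (LEAST k. \<exists>\<Gamma>. is_string_attractor T \<Gamma> \<and> card \<Gamma> = k)"

text \<open>Sensitivity of a measure C on strings (maximum taken as supremum).\<close>

definition MS_sub :: "('a list \<Rightarrow> nat) \<Rightarrow> nat \<Rightarrow> real" where
  "MS_sub C n = Sup {real (C T') / real (C T) | T T'.
      length T = n \<and> length T' = n \<and> ed T T' = 1}"

definition MS_ins :: "('a list \<Rightarrow> nat) \<Rightarrow> nat \<Rightarrow> real" where
  "MS_ins C n = Sup {real (C T') / real (C T) | T T'.
      length T = n \<and> length T' = n + 1 \<and> ed T T' = 1}"

definition MS_del :: "('a list \<Rightarrow> nat) \<Rightarrow> nat \<Rightarrow> real" where
  "MS_del C n = Sup {real (C T') / real (C T) | T T'.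
      length T = n \<and> length T' + 1 = n \<and> ed T T' = 1}"

definition AS_sub :: "('a list \<Rightarrow> nat) \<Rightarrow> nat \<Rightarrow> real" where
  "AS_sub C n = Sup {real (C T') - real (C T) | T T'.
      length T = n \<and> length T' = n \<and> ed T T' = 1}"

definition AS_ins :: "('a list \<Rightarrow> nat) \<Rightarrow> nat \<Rightarrow> real" where
  "AS_ins C n = Sup {real (C T') - real (C T) | T T'.
      length T = n \<and> length T' = n + 1 \<and> ed T T' = 1}"

definition AS_del :: "('a list \<Rightarrow> nat) \<Rightarrow> nat \<Rightarrow> real" where
  "AS_del C n = Sup {real (C T') - real (C T) | T T'.
      length T = n \<and> length T' + 1 = n \<and> ed T T' = 1}"

end

theory Submission
  imports Defs
begin

lemma ed_refl[simp]: "ed xs xs = 0"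
proof (induction xs)
  case Nil then show ?case by simp
next
  case (Cons x xs) then show ?case by simp
qed

lemma ed_zero: "ed xs ys = 0 \<Longrightarrow> xs = ys"
  by (induction xs ys rule: ed.induct) (auto split: if_splits)

lemma ed_prefix: "ed (u @ xs) (u @ ys) \<le> ed xs ys"
proof (induction u)
  case Nil then show ?case by simp
next
  case (Cons x u) then show ?case by (simp add: min_le_iff_disj)
qed

lemma ed_sub1: "ed (x # v) (y # v) \<le> 1"
  by (simp add: min_le_iff_disj)

lemma ed_ins1: "ed v (z # v) \<le> 1"
  by (cases v) (auto simp: min_le_iff_disj)

lemma ed_del1: "ed (z # v) v \<le> 1"
  by (cases v) (auto simp: min_le_iff_disj)

lemma attr_univ: "is_string_attractor T {..<length T}"
  unfolding is_string_attractor_def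
proof (intro conjI allI impI)
  fix i j assume "i \<le> j \<and> j < length T"
  then show "\<exists>i'. i' + (j - i) < length T \<and>
        take (j - i + 1) (drop i' T) = take (j - i + 1) (drop i T) \<and>
        (\<exists>p\<in>{..<length T}. i' \<le> p \<and> p \<le> i' + (j - i))"
    by (intro exI[of _ i]) auto
qed simp

lemma attr_finite: "is_string_attractor T G \<Longrightarrow> finite G"
  unfolding is_string_attractor_def using finite_subset by blast

lemma gamma_le: "is_string_attractor T G \<Longrightarrow> gamma T \<le> card G"
  unfolding gamma_def by (rule Least_le) blast

lemma gamma_ge:
  assumes "\<And>G. is_string_attractor T G \<Longrightarrow> k \<le> card G"
  shows "k \<le> gamma T"
proof -
  have ex: "\<exists>k G. is_string_attractor T G \<and> card G = k" using attr_univ by blast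
  have "\<exists>G. is_string_attractor T G \<and> card G = gamma T"
    unfolding gamma_def by (rule LeastI_ex[OF ex])
  then obtain G where "is_string_attractor T G" "card G = gamma T" by blast
  then show ?thesis using assms by metis
qed

lemma gamma_le_length: "gamma T \<le> length T"
  using gamma_le[OF attr_univ] by simp

lemma take_drop_eq_map:
  assumes "i + L \<le> n" "i' + L \<le> n"
  shows "take L (drop i' (map g [0..<n])) = take L (drop i (map g [0..<n]))
     \<longleftrightarrow> (\<forall>t<L. g (i'+t) = g (i+t))"
  using assms by (auto simp: list_eq_iff_nth_eq min_def)

lemma attr_map_hit:
  assumes A: "is_string_attractor (map g [0..<n]) G" and L: "0 < L" "i + L \<le> n"
    and H: "\<And>i'. i' + L \<le> n \<Longrightarrow> (\<forall>t<L. g (i'+t) = g (i+t)) \<Longrightarrow> {i'..<i'+L} \<subseteq> H"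
  shows "\<exists>p\<in>G. p \<in> H"
proof -
  from A have "\<exists>i'. i' + (i+L-1 - i) < n \<and>
       take (i+L-1 - i + 1) (drop i' (map g [0..<n])) = take (i+L-1 - i + 1) (drop i (map g [0..<n])) \<and>
       (\<exists>p\<in>G. i' \<le> p \<and> p \<le> i' + (i+L-1 - i))"
  proof -
    have h: "i \<le> i+L-1 \<and> i+L-1 < length (map g [0..<n])" using L by auto
    have "\<forall>i j. i \<le> j \<and> j < length (map g [0..<n]) \<longrightarrow>
        (\<exists>i'. i' + (j - i) < length (map g [0..<n]) \<and>
              take (j - i + 1) (drop i' (map g [0..<n])) = take (j - i + 1) (drop i (map g [0..<n])) \<and>
              (\<exists>p\<in>G. i' \<le> p \<and> p \<le> i' + (j - i)))"
      by (rule conjunct2[OF A[unfolded is_string_attractor_def]])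
    from this[rule_format, OF h] show ?thesis by simp
  qed
  then obtain i' p where i': "i' + (L-1) < n" 
    "take L (drop i' (map g [0..<n])) = take L (drop i (map g [0..<n]))"
    "p \<in> G" "i' \<le> p" "p \<le> i' + (L-1)"
    using L by auto
  then have "\<forall>t<L. g (i'+t) = g (i+t)"
    using take_drop_eq_map[of i L n i' g] L by auto
  then have "{i'..<i'+L} \<subseteq> H" using H i' L by auto
  moreover have "p \<in> {i'..<i'+L}" using i' L by auto
  ultimately show ?thesis using \<open>p \<in> G\<close> by (meson subsetD)
qed

lemma attr_mapI:
  assumes "G \<subseteq> {..<n}"
    and "\<And>i L. 0 < L \<Longrightarrow> i + L \<le> n \<Longrightarrow>
      \<exists>i'. i' + L \<le> n \<and> (\<forall>t<L. g (i'+t) = g (i+t)) \<and> (\<exists>p\<in>G. i' \<le> p \<and> p < i' + L)"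
  shows "is_string_attractor (map g [0..<n]) G"
  unfolding is_string_attractor_def
proof (intro conjI allI impI)
  show "G \<subseteq> {..<length (map g [0..<n])}" using assms by simp
  fix i j assume ij: "i \<le> j \<and> j < length (map g [0..<n])"
  then obtain i' where i': "i' + (j-i+1) \<le> n" "\<forall>t<j-i+1. g (i'+t) = g (i+t)"
     "\<exists>p\<in>G. i' \<le> p \<and> p < i' + (j-i+1)"
    using assms(2)[of "j-i+1" i] by auto
  show "\<exists>i'. i' + (j - i) < length (map g [0..<n]) \<and>
              take (j - i + 1) (drop i' (map g [0..<n])) = take (j - i + 1) (drop i (map g [0..<n])) \<and>
              (\<exists>p\<in>G. i' \<le> p \<and> p \<le> i' + (j - i))"
    apply (rule exI[of _ i'])
    using i' ij take_drop_eq_map[of i "j-i+1" n i' g] by auto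
qed

definition blk :: "nat \<Rightarrow> nat \<Rightarrow> (nat \<Rightarrow> nat) \<Rightarrow> nat \<Rightarrow> nat" where
  "blk K B w x = (if x < B then w x else if x - B < (K-1)*(K+2) then
      (if (x-B) mod (K+2) = 0 then (x-B) div (K+2) + 4
       else if (x-B) mod (K+2) = (x-B) div (K+2) + 2 then 1 else 0) else 3)"

lemma blk_W: "x < B \<Longrightarrow> blk K B w x = w x"
  by (simp add: blk_def)

lemma blk_pad: "B + (K-1)*(K+2) \<le> x \<Longrightarrow> blk K B w x = 3"
  by (simp add: blk_def)

lemma divmod_aux:
  assumes "r < (M::nat)"
  shows "(q*M + r) div M = q" "(q*M + r) mod M = r"
  using assms by auto

lemma blk_at:
  assumes "q < K-1" "r < K+2"
  shows "blk K B w (B + q*(K+2) + r) = (if r = 0 then q+4 else if r = q+2 then 1 else 0)"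
proof -
  have d: "(q*(K+2) + r) div (K+2) = q" "(q*(K+2) + r) mod (K+2) = r"
    using divmod_aux[OF assms(2), of q] by blast+
  have "q*(K+2) + r < (K-1)*(K+2)"
  proof -
    have "q*(K+2) + r < q*(K+2) + (K+2)" using assms by simp
    also have "\<dots> = (q+1)*(K+2)" by simp
    also have "\<dots> \<le> (K-1)*(K+2)" using assms by (intro mult_right_mono) auto
    finally show ?thesis .
  qed
  then have lt: "q*(K+2) + r < (K-1)*(K+2)" by simp
  have x: "B + q*(K+2) + r - B = q*(K+2) + r" by simp
  have nb: "\<not> (B + q*(K+2) + r < B)" by simp
  show ?thesis unfolding blk_def by (simp only: nb lt x d if_False if_True)
qed

lemma blk_dec:
  assumes "B \<le> (x::nat)" "x < B + (K-1)*(K+2)"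
  shows "\<exists>q r. q < K-1 \<and> r < K+2 \<and> x = B + q*(K+2) + r"
proof (intro exI conjI)
  let ?d = "x - B"
  show "?d mod (K+2) < K+2" by simp
  have "?d div (K+2) * (K+2) + ?d mod (K+2) = ?d" by (rule div_mult_mod_eq)
  then show "x = B + ?d div (K+2) * (K+2) + ?d mod (K+2)" using assms by linarith
  show "?d div (K+2) < K-1" using assms by (simp add: div_less_iff_less_mult)
qed

lemma blk_val_cases:
  "blk K B w x = w x \<and> x < B \<or> blk K B w x = 3 \<and> B + (K-1)*(K+2) \<le> x \<or>
   (\<exists>q r. q < K-1 \<and> r < K+2 \<and> x = B + q*(K+2) + r)"
proof (cases "x < B")
  case True then show ?thesis using blk_W[of x B K w] by simp
next
  case False
  show ?thesis
  proof (cases "x < B + (K-1)*(K+2)")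
    case True then show ?thesis using False blk_dec[of B x K] by simp
  next
    case F2: False then show ?thesis using blk_pad[of B K x w] by simp
  qed
qed

lemma blk_lt:
  assumes "(q::nat) < K-1" "r < K+2"
  shows "B + q*(K+2) + r < B + (K-1)*(K+2)"
proof -
  have "q*(K+2) + r < q*(K+2) + (K+2)" using assms by simp
  also have "\<dots> = (q+1)*(K+2)" by simp
  also have "\<dots> \<le> (K-1)*(K+2)" using assms by (intro mult_right_mono) auto
  finally show ?thesis by simp
qed

lemma blk_next:
  assumes "q < K-1"
  shows "blk K B w (B + q*(K+2) + (K+2)) \<ge> 3"
proof (cases "q+1 < K-1")
  case True
  have e: "B + q*(K+2) + (K+2) = B + (q+1)*(K+2) + 0" by simp
  show ?thesis unfolding e by (subst blk_at[OF True]) simp_all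
next
  case False
  then have "q + 1 = K - 1" using assms by simp
  then have "B + q*(K+2) + (K+2) = B + (K-1)*(K+2)" by (metis add.assoc mult_Suc Suc_eq_plus1 add.commute)
  then show ?thesis using blk_pad[of B K "B + q*(K+2) + (K+2)" w] by simp
qed

lemma force_c:
  assumes A: "is_string_attractor (map (blk K B w) [0..<n]) G"
    and n: "B + (K-1)*(K+2) \<le> n" and W: "\<forall>x<B. w x \<le> 2" and q: "q < K-1"
  shows "B + q*(K+2) \<in> G"
proof -
  let ?s = "B + q*(K+2)"
  have s: "?s + 1 \<le> n" using blk_lt[OF q, of 0 B] n by simp
  have v: "blk K B w ?s = q + 4" using blk_at[OF q, of 0 B w] by simp
  have "\<exists>p\<in>G. p \<in> {?s}"
  proof (rule attr_map_hit[OF A _ s])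
    fix i' assume "i' + 1 \<le> n" "\<forall>t<1. blk K B w (i' + t) = blk K B w (?s + t)"
    then have e: "blk K B w i' = q + 4" using v by auto
    have "i' = ?s"
    proof -
      consider "blk K B w i' = w i' \<and> i' < B" | "blk K B w i' = 3" 
        | q' r' where "q' < K-1" "r' < K+2" "i' = B + q'*(K+2) + r'"
        using blk_val_cases by blast
      then show ?thesis
      proof cases
        case 1 then show ?thesis using W e by auto
      next
        case 2 then show ?thesis using e by auto
      next
        case 3 then show ?thesis using e blk_at[of q' K r' B w] by (auto split: if_splits)
      qed
    qed
    then show "{i'..<i'+1} \<subseteq> {?s}" by auto
  qed simp
  then show ?thesis by auto
qed

lemma force_pad:
  assumes A: "is_string_attractor (map (blk K B w) [0..<n]) G"
    and n: "B + (K-1)*(K+2) < n" and W: "\<forall>x<B. w x \<le> 2"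
  shows "\<exists>p\<in>G. B + (K-1)*(K+2) \<le> p"
proof -
  let ?s = "B + (K-1)*(K+2)"
  have v: "blk K B w ?s = 3" by (simp add: blk_pad)
  have "\<exists>p\<in>G. p \<in> {?s..}"
  proof (rule attr_map_hit[OF A _ ])
    show "?s + 1 \<le> n" using n by simp
    fix i' assume "i' + 1 \<le> n" "\<forall>t<1. blk K B w (i' + t) = blk K B w (?s + t)"
    then have e: "blk K B w i' = 3" using v by auto
    have "?s \<le> i'"
    proof -
      consider "blk K B w i' = w i' \<and> i' < B" | "?s \<le> i'"
        | q' r' where "q' < K-1" "r' < K+2" "i' = B + q'*(K+2) + r'"
        using blk_val_cases by blast
      then show ?thesis
      proof cases
        case 1 then show ?thesis using W e by auto
      next
        case 2 then show ?thesis by auto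
      next
        case 3 then show ?thesis using e blk_at[of q' K r' B w] by (auto split: if_splits)
      qed
    qed
    then show "{i'..<i'+1} \<subseteq> {?s..}" by auto
  qed simp
  then show ?thesis by auto
qed

lemma arun:
  assumes K: "2 \<le> K" and z: "\<forall>t<K. blk K B w (i'+t) = 0"
  shows "i' + K \<le> B"
proof (rule ccontr)
  assume c: "\<not> i' + K \<le> B"
  have K1: "0 < K - 1" using K by simp
  show False
  proof (cases "i' < B")
    case True
    have "blk K B w (B + 0*(K+2) + 0) = 4" using blk_at[OF K1, of 0 B w] by simp
    moreover have "B = i' + (B - i')" "B - i' < K" using True c by auto
    ultimately show False using z by (metis add.right_neutral mult_zero_left zero_neq_numeral)
  next
    case False
    consider "blk K B w i' = w i' \<and> i' < B" | "blk K B w i' = 3"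
        | q r where "q < K-1" "r < K+2" "i' = B + q*(K+2) + r"
        using blk_val_cases by blast
    then show False
    proof cases
      case 1 then show ?thesis using False by simp
    next
      case 2 then show ?thesis using z[rule_format, of 0] K by simp
    next
      case 3
      show ?thesis
      proof (cases "r = 0")
        case True then show ?thesis using z[rule_format, of 0] K 3 blk_at[of q K r B w] by simp
      next
        case r0: False
        show ?thesis
        proof (cases "r \<le> q+2")
          case True
          have "blk K B w (B + q*(K+2) + (q+2)) = 1" using blk_at[of q K "q+2" B w] 3 by simp
          moreover have "B + q*(K+2) + (q+2) = i' + (q+2-r)" using 3 True by simp
          moreover have "q+2-r < K" using 3 r0 True by linarith
          ultimately show ?thesis using z by (metis zero_neq_one)
        next
          case False
          have "blk K B w (B + q*(K+2) + (K+2)) \<ge> 3" using blk_next[OF 3(1)] .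
          moreover have "B + q*(K+2) + (K+2) = i' + (K+2-r)" using 3 False by simp
          moreover have "K+2-r < K" using 3 False by linarith
          ultimately show ?thesis using z by (metis not_numeral_le_zero)
        qed
      qed
    qed
  qed
qed

lemma blk_s:
  assumes q: "q < K-1" and t: "t \<le> K"
  shows "blk K B w (B + q*(K+2) + 1 + t) = (if t = q+1 then 1 else 0)"
proof -
  have e: "B + q*(K+2) + 1 + t = B + q*(K+2) + (t+1)" by simp
  show ?thesis unfolding e using t by (subst blk_at[OF q]) auto
qed

lemma force_s:
  assumes A: "is_string_attractor (map (blk K B w) [0..<n]) G"
    and n: "B + (K-1)*(K+2) \<le> n" and K: "2 \<le> K"
    and W1: "\<forall>x<B. w x \<le> 2" and W2: "\<forall>x<B. w x = 1 \<longrightarrow> x+1 < B \<and> w (x+1) \<noteq> 0"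
    and q: "q < K-1"
  shows "\<exists>p\<in>G. B + q*(K+2) < p \<and> p \<le> B + q*(K+2) + K + 1"
proof -
  let ?s = "B + q*(K+2)"
  have s: "?s + 1 + (K+1) \<le> n" using blk_lt[OF q, of "K+1" B] n by simp
  have "\<exists>p\<in>G. p \<in> {?s+1..<?s+1+(K+1)}"
  proof (rule attr_map_hit[OF A _ s])
    fix i' assume "i' + (K+1) \<le> n" and eq: "\<forall>t<K+1. blk K B w (i' + t) = blk K B w (?s + 1 + t)"
    have z: "blk K B w (i' + t) = (if t = q+1 then 1 else 0)" if tK: "t \<le> K" for t
    proof -
      have "t < K+1" using tK by simp
      with eq have "blk K B w (i' + t) = blk K B w (?s + 1 + t)" by blast
      also have "\<dots> = (if t = q+1 then 1 else 0)" by (rule blk_s[OF q tK])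
      finally show ?thesis .
    qed
    have qK: "q + 1 \<le> K" using q by simp
    let ?y = "i' + (q+1)"
    have y1: "blk K B w ?y = 1" using z[OF qK] by simp
    have "i' = ?s + 1"
    proof -
      consider "blk K B w ?y = w ?y \<and> ?y < B" | "blk K B w ?y = 3"
        | q' r' where "q' < K-1" "r' < K+2" "?y = B + q'*(K+2) + r'"
        using blk_val_cases by blast
      then show ?thesis
      proof cases
        case 1
        then have "?y + 1 < B" "w (?y+1) \<noteq> 0" using W2 y1 by auto
        moreover have "blk K B w (i' + (q+2)) = 0" using z[of "q+2"] q by simp
        moreover have "i' + (q+2) = ?y + 1" by simp
        moreover have "blk K B w (?y+1) = w (?y+1)" using \<open>?y + 1 < B\<close> by (rule blk_W)
        ultimately show ?thesis by simp
      next
        case 2 then show ?thesis using y1 by simp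
      next
        case 3
        have v: "blk K B w ?y = (if r' = 0 then q'+4 else if r' = q'+2 then 1 else 0)"
          using 3 blk_at[of q' K r' B w] by simp
        have "(if r' = 0 then q'+4 else if r' = q'+2 then 1 else 0) = (1::nat)" using v y1 by simp
        then have r': "r' = q'+2" by (simp split: if_splits)
        consider "q' < q" | "q < q'" | "q' = q" by linarith
        then show ?thesis
        proof cases
          case 1
          have "blk K B w (B + q'*(K+2) + 0) = q'+4" using blk_at[OF 3(1), of 0 B w] by simp
          moreover have "B + q'*(K+2) + 0 = i' + (q - q' - 1)" using 3 r' 1 by simp
          moreover have "q - q' - 1 \<le> K" "q - q' - 1 \<noteq> q+1" using 1 q by auto
          ultimately show ?thesis using z by (metis add_eq_0_iff_both_eq_0 zero_neq_numeral)
        next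
          case 2
          have "blk K B w (B + q'*(K+2) + (K+2)) \<ge> 3" using blk_next[OF 3(1)] .
          moreover have "B + q'*(K+2) + (K+2) = i' + (q + 1 + K - q')" using 3 r' 2 by simp
          moreover have "q + 1 + K - q' \<le> K" "q + 1 + K - q' \<noteq> q+1" using 2 3 by auto
          ultimately show ?thesis using z by (metis not_numeral_le_zero one_le_numeral not_one_le_zero)
        next
          case eq3: 3
          then show ?thesis using 3 r' by simp
        qed
      qed
    qed
    then show "{i'..<i'+(K+1)} \<subseteq> {?s+1..<?s+1+(K+1)}" by simp
  qed simp
  then obtain p where "p \<in> G" "p \<in> {?s+1..<?s+1+(K+1)}" by blast
  then show ?thesis by (intro bexI[of _ p]) auto
qed

lemma card_split:
  assumes "finite G" "a \<le> b" "b \<le> (c::nat)"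
  shows "card (G \<inter> {a..<c}) = card (G \<inter> {a..<b}) + card (G \<inter> {b..<c})"
proof -
  have "G \<inter> {a..<c} = (G \<inter> {a..<b}) \<union> (G \<inter> {b..<c})" using assms by auto
  then show ?thesis using assms by (simp add: card_Un_disjoint disjoint_iff)
qed

lemma count_blocks:
  assumes G: "finite G"
    and h: "\<And>q. q < Q \<Longrightarrow> B + q*(K+2) \<in> G \<and> (\<exists>p\<in>G. B + q*(K+2) < p \<and> p \<le> B + q*(K+2) + K + 1)"
  shows "2*Q \<le> card (G \<inter> {B..<B+Q*(K+2)})"
  using h
proof (induction Q)
  case 0 then show ?case by simp
next
  case (Suc Q)
  have IH: "2*Q \<le> card (G \<inter> {B..<B+Q*(K+2)})" using Suc by auto
  obtain p where p: "p \<in> G" "B + Q*(K+2) < p" "p \<le> B + Q*(K+2) + K + 1"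
    using Suc.prems[of Q] by auto
  have s: "B + Q*(K+2) \<in> G" using Suc.prems[of Q] by auto
  have "{B + Q*(K+2), p} \<subseteq> G \<inter> {B+Q*(K+2)..<B+Suc Q*(K+2)}" using p s by auto
  then have "card {B + Q*(K+2), p} \<le> card (G \<inter> {B+Q*(K+2)..<B+Suc Q*(K+2)})"
    using G by (intro card_mono) auto
  then have 2: "2 \<le> card (G \<inter> {B+Q*(K+2)..<B+Suc Q*(K+2)})" using p by simp
  have "card (G \<inter> {B..<B+Suc Q*(K+2)}) = card (G \<inter> {B..<B+Q*(K+2)}) + card (G \<inter> {B+Q*(K+2)..<B+Suc Q*(K+2)})"
    by (rule card_split[OF G]) auto
  then show ?case using IH 2 by simp
qed

lemma card_three:
  assumes "finite G" "a \<le> (b::nat)"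
  shows "card (G \<inter> {..<a}) + card (G \<inter> {a..<b}) + card (G \<inter> {b..}) \<le> card G"
proof -
  have "card (G \<inter> {..<a}) + card (G \<inter> {a..<b}) + card (G \<inter> {b..}) = 
        card ((G \<inter> {..<a}) \<union> (G \<inter> {a..<b}) \<union> (G \<inter> {b..}))"
  proof -
    have d1: "(G \<inter> {..<a}) \<inter> (G \<inter> {a..<b}) = {}" by auto
    have d2: "((G \<inter> {..<a}) \<union> (G \<inter> {a..<b})) \<inter> (G \<inter> {b..}) = {}" using assms by auto
    show ?thesis using assms(1) d1 d2 by (simp add: card_Un_disjoint)
  qed
  also have "\<dots> \<le> card G" using assms by (intro card_mono) auto
  finally show ?thesis .
qed

lemma lower_generic:
  assumes A: "is_string_attractor (map (blk K B w) [0..<n]) G"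
    and n: "n = B + (K-1)*(K+2) + m" and K: "2 \<le> K"
    and W1: "\<forall>x<B. w x \<le> 2" and W2: "\<forall>x<B. w x = 1 \<longrightarrow> x+1 < B \<and> w (x+1) \<noteq> 0"
  shows "card (G \<inter> {..<B}) + 2*(K-1) + (if 0 < m then 1 else 0) \<le> card G"
proof -
  have fin: "finite G" using attr_finite[OF A] .
  have nn: "B + (K-1)*(K+2) \<le> n" using n by simp
  have c2: "2*(K-1) \<le> card (G \<inter> {B..<B+(K-1)*(K+2)})"
    using count_blocks[OF fin] force_c[OF A nn W1] force_s[OF A nn K W1 W2] by blast
  have c3: "(if 0 < m then 1 else 0) \<le> card (G \<inter> {B+(K-1)*(K+2)..})"
  proof (cases "0 < m")
    case True
    then obtain p where p: "p \<in> G" "B + (K-1)*(K+2) \<le> p" using force_pad[OF A _ W1] n by auto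
    have "finite (G \<inter> {B+(K-1)*(K+2)..})" using fin by simp
    moreover have "p \<in> G \<inter> {B+(K-1)*(K+2)..}" using p by simp
    ultimately have "card (G \<inter> {B+(K-1)*(K+2)..}) \<noteq> 0" by auto
    then show ?thesis using True by simp
  qed simp
  have "card (G \<inter> {..<B}) + card (G \<inter> {B..<B+(K-1)*(K+2)}) + card (G \<inter> {B+(K-1)*(K+2)..}) \<le> card G"
    by (rule card_three[OF fin]) simp
  then show ?thesis using c2 c3 by linarith
qed

lemma force_W:
  assumes A: "is_string_attractor (map (blk K B w) [0..<n]) G"
    and n: "B \<le> n" and x0: "x0 < B" and v: "w x0 = 2"
    and u: "\<forall>x<B. w x = 2 \<longrightarrow> x = x0"
  shows "x0 \<in> G"
proof -
  have s: "x0 + 1 \<le> n" using x0 n by simp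
  have vv: "blk K B w x0 = 2" using blk_W[OF x0] v by simp
  have "\<exists>p\<in>G. p \<in> {x0}"
  proof (rule attr_map_hit[OF A _ s])
    fix i' assume "i' + 1 \<le> n" "\<forall>t<1. blk K B w (i' + t) = blk K B w (x0 + t)"
    then have e: "blk K B w i' = 2" using vv by auto
    have "i' = x0"
    proof -
      consider "blk K B w i' = w i' \<and> i' < B" | "blk K B w i' = 3" 
        | q' r' where "q' < K-1" "r' < K+2" "i' = B + q'*(K+2) + r'"
        using blk_val_cases by blast
      then show ?thesis
      proof cases
        case 1 then show ?thesis using u e by auto
      next
        case 2 then show ?thesis using e by auto
      next
        case 3 then show ?thesis using e blk_at[of q' K r' B w] by (auto split: if_splits)
      qed
    qed
    then show "{i'..<i'+1} \<subseteq> {x0}" by auto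
  qed simp
  then show ?thesis by auto
qed

lemma arun_hit:
  assumes A: "is_string_attractor (map (blk K B w) [0..<n]) G"
    and n: "B \<le> n" and K: "2 \<le> K" "K \<le> B" and z: "\<forall>t<K. w t = 0"
  shows "\<exists>p\<in>G. p < B \<and> w p = 0"
proof -
  have s: "0 + K \<le> n" using n K by simp
  have "\<exists>p\<in>G. p \<in> {x. x < B \<and> w x = 0}"
  proof (rule attr_map_hit[OF A _ s])
    show "0 < K" using K by simp
    fix i' assume "i' + K \<le> n" and eq: "\<forall>t<K. blk K B w (i' + t) = blk K B w (0 + t)"
    have zz: "\<forall>t<K. blk K B w (i' + t) = 0"
    proof (intro allI impI)
      fix t assume "t < K"
      then show "blk K B w (i' + t) = 0" using eq z blk_W[of t B K w] K by auto
    qed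
    have le: "i' + K \<le> B" by (rule arun[OF K(1) zz])
    show "{i'..<i'+K} \<subseteq> {x. x < B \<and> w x = 0}"
    proof
      fix x assume x: "x \<in> {i'..<i'+K}"
      then have "x - i' < K" by auto
      then have "blk K B w (i' + (x - i')) = 0" using zz by blast
      moreover have "i' + (x - i') = x" using x by auto
      moreover have "x < B" using x le by auto
      ultimately show "x \<in> {x. x < B \<and> w x = 0}" using blk_W[of x B K w] by auto
    qed
  qed
  then show ?thesis by auto
qed

definition wT :: "nat \<Rightarrow> nat \<Rightarrow> nat" where "wT K x = (if x = K then 1 else 0)"

definition G0 :: "nat \<Rightarrow> nat \<Rightarrow> nat set" where
  "G0 K m = {0, K} \<union> (\<lambda>q. 2*K+1 + q*(K+2)) ` {..<K-1} \<union>
     (if 0 < m then {2*K+1 + (K-1)*(K+2)} else {})"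

lemma card_G0:
  assumes "1 \<le> K" shows "card (G0 K m) \<le> K + 1 + (if 0 < m then 1 else 0)"
proof -
  have "card (G0 K m) \<le> card ({0, K} \<union> (\<lambda>q. 2*K+1 + q*(K+2)) ` {..<K-1}) + 
     card (if 0 < m then {2*K+1 + (K-1)*(K+2)} else {})"
    unfolding G0_def by (rule card_Un_le)
  also have "\<dots> \<le> card {0, K} + card ((\<lambda>q. 2*K+1 + q*(K+2)) ` {..<K-1}) + 
     card (if 0 < m then {2*K+1 + (K-1)*(K+2)} else {})"
    by (intro add_right_mono card_Un_le)
  also have "\<dots> \<le> 2 + (K-1) + (if 0 < m then 1 else 0)"
  proof -
    have "card {0, K} \<le> 2" by (simp add: card_insert_le_m1)
    moreover have "card ((\<lambda>q. 2*K+1 + q*(K+2)) ` {..<K-1}) \<le> K-1"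
      using card_image_le[of "{..<K-1}"] by fastforce
    ultimately show ?thesis by simp
  qed
  finally show ?thesis using assms by simp
qed

lemma upper_T:
  assumes K: "2 \<le> K" and n: "n = 2*K+1 + (K-1)*(K+2) + m"
  shows "is_string_attractor (map (blk K (2*K+1) (wT K)) [0..<n]) (G0 K m)"
proof (rule attr_mapI)
  let ?f = "blk K (2*K+1) (wT K)"
  let ?N = "2*K+1 + (K-1)*(K+2)"
  have KN: "2*K+1 < ?N"
  proof -
    have "0 < (K-1)*(K+2)" using K by simp
    then show ?thesis by linarith
  qed
  show "G0 K m \<subseteq> {..<n}"
  proof
    fix x assume "x \<in> G0 K m"
    then consider "x = 0" | "x = K" | q where "q < K-1" "x = 2*K+1 + q*(K+2)" | "0 < m" "x = ?N"
      unfolding G0_def by (auto split: if_splits)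
    then show "x \<in> {..<n}"
    proof cases
      case 3 then show ?thesis using blk_lt[OF 3(1), of 0 "2*K+1"] n by simp
    qed (use n KN in auto)
  qed
  fix i L assume L: "0 < L" "i + L \<le> n"
  show "\<exists>i'. i' + L \<le> n \<and> (\<forall>t<L. ?f (i'+t) = ?f (i+t)) \<and> (\<exists>p\<in>G0 K m. i' \<le> p \<and> p < i' + L)"
  proof (cases "\<exists>p\<in>G0 K m. i \<le> p \<and> p < i + L")
    case True then show ?thesis using L by blast
  next
    case False
    then have np: "\<And>p. p \<in> G0 K m \<Longrightarrow> p < i \<or> i + L \<le> p" by force
    have G0K: "K \<in> G0 K m" "0 \<in> G0 K m" unfolding G0_def by auto
    have G0s: "2*K+1 + q*(K+2) \<in> G0 K m" if "q < K-1" for q unfolding G0_def using that by auto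
    have G0N: "?N \<in> G0 K m" if "0 < m" unfolding G0_def using that by auto
    show ?thesis
    proof (cases "\<forall>t<L. ?f (i+t) = 0")
      case True
      have LK: "L \<le> K"
      proof (rule ccontr)
        assume "\<not> L \<le> K"
        then have KL: "K < L" by simp
        have "i + K \<le> 2*K+1" by (rule arun[OF K, where w="wT K" and B="2*K+1"]) (use True KL in auto)
        have "\<forall>t<K. ?f ((i+1)+t) = 0"
        proof (intro allI impI)
          fix t assume "t < K"
          then have "1+t < L" using KL by simp
          then have "?f (i + (1+t)) = 0" using True by blast
          then show "?f ((i+1)+t) = 0" by (simp only: add.assoc)
        qed
        then have "(i+1) + K \<le> 2*K+1" by (rule arun[OF K])
        then have "i \<le> K" by simp
        then have "K - i < L" using KL by simp
        then have "?f (i + (K - i)) = 0" using True by blast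
        moreover have "i + (K - i) = K" using \<open>i \<le> K\<close> by simp
        moreover have "?f K = 1" by (simp add: blk_W wT_def)
        ultimately show False by simp
      qed
      show ?thesis
      proof (intro exI conjI)
        show "0 + L \<le> n" using L by simp
        show "\<forall>t<L. ?f (0+t) = ?f (i+t)"
          using True LK by (auto simp: blk_W wT_def)
        show "\<exists>p\<in>G0 K m. 0 \<le> p \<and> p < 0 + L" using G0K L by auto
      qed
    next
      case False
      then obtain t0 where t0: "t0 < L" "?f (i+t0) \<noteq> 0" by auto
      define y where "y = i + t0"
      have fy: "?f y \<noteq> 0" using t0 y_def by simp
      consider "?f y = wT K y \<and> y < 2*K+1" | "?f y = 3 \<and> ?N \<le> y"
        | q r where "q < K-1" "r < K+2" "y = 2*K+1 + q*(K+2) + r"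
        using blk_val_cases by blast
      then show ?thesis
      proof cases
        case 1
        then have "y = K" using fy by (simp add: wT_def split: if_splits)
        then show ?thesis using np[OF G0K(1)] y_def t0 by simp
      next
        case 2
        have m: "0 < m" using 2 n L t0 y_def by simp
        have iN: "?N < i" using np[OF G0N[OF m]] 2 y_def t0 by simp
        show ?thesis
        proof (intro exI conjI)
          show "?N + L \<le> n" using iN L by simp
          show "\<forall>t<L. ?f (?N+t) = ?f (i+t)" using iN by (auto simp: blk_pad)
          show "\<exists>p\<in>G0 K m. ?N \<le> p \<and> p < ?N + L" using G0N[OF m] L by auto
        qed
      next
        case 3
        define s where "s = 2*K+1 + q*(K+2)"
        have ys: "y = s + r" using 3 s_def by simp
        have fs: "?f (s + r') = (if r' = 0 then q+4 else if r' = q+2 then 1 else 0)" if "r' < K+2" for r'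
          unfolding s_def by (rule blk_at[OF 3(1) that])
        have r0: "r \<noteq> 0" using np[OF G0s[OF 3(1)]] ys y_def t0 s_def by auto
        have rq: "r = q+2" using fy fs[OF 3(2)] ys r0 by (auto split: if_splits)
        have si: "s < i" using np[OF G0s[OF 3(1)]] ys y_def t0 s_def by auto
        have snext: "s + (K+2) = 2*K+1 + (q+1)*(K+2)" unfolding s_def by simp
        have iL: "i + L \<le> s + (K+2)"
        proof (rule ccontr)
          assume c: "\<not> i + L \<le> s + (K+2)"
          have inr: "i \<le> s + (K+2)" using ys y_def rq 3(1) by simp
          show False
          proof (cases "q+1 < K-1")
            case True
            then show False using np[OF G0s[OF True]] snext c inr by simp
          next
            case False
            then have "q + 1 = K - 1" using 3 by simp
            then have e: "s + (K+2) = ?N" using snext by simp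
            show False
            proof (cases "0 < m")
              case True then show False using np[OF G0N[OF True]] e c inr by linarith
            next
              case False then show False using e c L n by linarith
            qed
          qed
        qed
        have t0q: "t0 \<le> q+1" using ys y_def si rq by simp
        have qK: "q + 1 \<le> K - 1" using 3 by simp
        define i' where "i' = K - t0"
        show ?thesis
        proof (intro exI conjI)
          have "i' + L \<le> 2*K+1" using iL t0q qK ys y_def rq i'_def by simp
          then show "i' + L \<le> n" using n by simp
          show "\<forall>t<L. ?f (i'+t) = ?f (i+t)"
          proof (intro allI impI)
            fix t assume tL: "t < L"
            have a1: "i' + t < 2*K+1" using iL t0q qK ys y_def rq i'_def tL by simp
            have "?f (i'+t) = (if t = t0 then 1 else 0)"
              using a1 i'_def t0q qK by (auto simp: blk_W wT_def)
            moreover have "?f (i+t) = (if t = t0 then 1 else 0)"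
            proof -
              have e: "i + t = s + (i + t - s)" using si by simp
              have lt: "i + t - s < K+2" using iL tL si by simp
              have "?f (i+t) = (if i + t - s = 0 then q+4 else if i + t - s = q+2 then 1 else 0)"
                by (subst e) (rule fs[OF lt])
              then show ?thesis using si ys y_def rq by auto
            qed
            ultimately show "?f (i'+t) = ?f (i+t)" by simp
          qed
          have "i' \<le> K \<and> K < i' + L" using t0 i'_def t0q qK by simp
          then show "\<exists>p\<in>G0 K m. i' \<le> p \<and> p < i' + L" using G0K(1) by blast
        qed
      qed
    qed
  qed
qed

definition wS :: "nat \<Rightarrow> nat \<Rightarrow> nat" where "wS K x = (if x = K then 2 else 0)"
definition wI :: "nat \<Rightarrow> nat \<Rightarrow> nat" where "wI K x = (if x = K then 1 else if x = K+1 then 2 else 0)"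

definition Tn :: "nat \<Rightarrow> nat \<Rightarrow> nat list" where
  "Tn K m = map (blk K (2*K+1) (wT K)) [0..<2*K+1+(K-1)*(K+2)+m]"
definition Sn :: "nat \<Rightarrow> nat \<Rightarrow> nat list" where
  "Sn K m = map (blk K (2*K+1) (wS K)) [0..<2*K+1+(K-1)*(K+2)+m]"
definition In :: "nat \<Rightarrow> nat \<Rightarrow> nat list" where
  "In K m = map (blk K (2*K+2) (wI K)) [0..<2*K+2+(K-1)*(K+2)+m]"
definition Dn :: "nat \<Rightarrow> nat \<Rightarrow> nat list" where
  "Dn K m = map (blk K (2*K) (\<lambda>_. 0)) [0..<2*K+(K-1)*(K+2)+m]"

lemma len_Tn: "length (Tn K m) = 2*K+1+(K-1)*(K+2)+m" by (simp add: Tn_def)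
lemma len_Sn: "length (Sn K m) = 2*K+1+(K-1)*(K+2)+m" by (simp add: Sn_def)
lemma len_In: "length (In K m) = 2*K+1+(K-1)*(K+2)+m + 1" by (simp add: In_def)
lemma len_Dn: "length (Dn K m) + 1 = 2*K+1+(K-1)*(K+2)+m" by (simp add: Dn_def)

lemma gT_upper: "2 \<le> K \<Longrightarrow> gamma (Tn K m) \<le> K + 1 + (if 0 < m then 1 else 0)"
  unfolding Tn_def using gamma_le[OF upper_T[of K _ m]] card_G0[of K m] by fastforce

lemma gT_lower:
  assumes K: "2 \<le> K" shows "K - 1 \<le> gamma (Tn K m)"
proof (rule gamma_ge)
  fix G assume A: "is_string_attractor (Tn K m) G"
  have fin: "finite G" using attr_finite[OF A] .
  have W1: "\<forall>x<2*K+1. wT K x \<le> 2" by (simp add: wT_def)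
  have sub: "(\<lambda>q. 2*K+1 + q*(K+2)) ` {..<K-1} \<subseteq> G"
    using force_c[OF A[unfolded Tn_def] _ W1] by auto
  have inj: "inj_on (\<lambda>q. 2*K+1 + q*(K+2)) {..<K-1}"
  proof (rule inj_onI)
    fix x y assume "2*K+1 + x*(K+2) = 2*K+1 + y*(K+2)"
    then have "x*(K+2) = y*(K+2)" by (simp only: add_left_cancel)
    moreover have nz: "K+2 \<noteq> (0::nat)" by simp
    ultimately show "x = y" by (simp only: mult_right_cancel[OF nz])
  qed
  have "card ((\<lambda>q. 2*K+1 + q*(K+2)) ` {..<K-1}) \<le> card G" by (rule card_mono[OF fin sub])
  moreover have "card ((\<lambda>q. 2*K+1 + q*(K+2)) ` {..<K-1}) = K - 1" using card_image[OF inj] by simp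
  ultimately show "K - 1 \<le> card G" by simp
qed

lemma gS_lower:
  assumes K: "2 \<le> K" shows "2*K + (if 0 < m then 1 else 0) \<le> gamma (Sn K m)"
proof (rule gamma_ge)
  fix G assume A0: "is_string_attractor (Sn K m) G"
  note A = A0[unfolded Sn_def]
  have fin: "finite G" using attr_finite[OF A0] .
  have W1: "\<forall>x<2*K+1. wS K x \<le> 2" by (simp add: wS_def)
  have W2: "\<forall>x<2*K+1. wS K x = 1 \<longrightarrow> x+1 < 2*K+1 \<and> wS K (x+1) \<noteq> 0" by (simp add: wS_def)
  have L: "card (G \<inter> {..<2*K+1}) + 2*(K-1) + (if 0 < m then 1 else 0) \<le> card G"
    by (rule lower_generic[OF A refl K W1 W2])
  have KG: "K \<in> G" by (rule force_W[OF A]) (auto simp: wS_def)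
  obtain p where p: "p \<in> G" "p < 2*K+1" "wS K p = 0"
  proof -
    have "2*K+1 \<le> 2*K+1+(K-1)*(K+2)+m" by (rule le_trans[OF le_add1 le_add1])
    moreover have "K \<le> 2*K+1" by simp
    moreover have "\<forall>t<K. wS K t = 0" by (simp add: wS_def)
    ultimately have "\<exists>p\<in>G. p < 2*K+1 \<and> wS K p = 0" by (rule arun_hit[OF A _ K])
    then show ?thesis using that by blast
  qed
  have "p \<noteq> K" using p by (auto simp: wS_def split: if_splits)
  then have "card {K, p} \<le> card (G \<inter> {..<2*K+1})" using fin p KG by (intro card_mono) auto
  then have "2 \<le> card (G \<inter> {..<2*K+1})" using \<open>p \<noteq> K\<close> by simp
  then show "2*K + (if 0 < m then 1 else 0) \<le> card G" using L K by simp
qed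

lemma gI_lower:
  assumes K: "2 \<le> K" shows "2*K + (if 0 < m then 1 else 0) \<le> gamma (In K m)"
proof (rule gamma_ge)
  fix G assume A0: "is_string_attractor (In K m) G"
  note A = A0[unfolded In_def]
  have fin: "finite G" using attr_finite[OF A0] .
  have W1: "\<forall>x<2*K+2. wI K x \<le> 2" by (simp add: wI_def)
  have W2: "\<forall>x<2*K+2. wI K x = 1 \<longrightarrow> x+1 < 2*K+2 \<and> wI K (x+1) \<noteq> 0" by (simp add: wI_def)
  have L: "card (G \<inter> {..<2*K+2}) + 2*(K-1) + (if 0 < m then 1 else 0) \<le> card G"
    by (rule lower_generic[OF A refl K W1 W2])
  have KG: "K+1 \<in> G" by (rule force_W[OF A]) (auto simp: wI_def)
  obtain p where p: "p \<in> G" "p < 2*K+2" "wI K p = 0"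
  proof -
    have "2*K+2 \<le> 2*K+2+(K-1)*(K+2)+m" by (rule le_trans[OF le_add1 le_add1])
    moreover have "K \<le> 2*K+2" by simp
    moreover have "\<forall>t<K. wI K t = 0" by (simp add: wI_def)
    ultimately have "\<exists>p\<in>G. p < 2*K+2 \<and> wI K p = 0" by (rule arun_hit[OF A _ K])
    then show ?thesis using that by blast
  qed
  have "p \<noteq> K+1" using p by (auto simp: wI_def split: if_splits)
  then have "card {K+1, p} \<le> card (G \<inter> {..<2*K+2})" using fin p KG by (intro card_mono) auto
  then have "2 \<le> card (G \<inter> {..<2*K+2})" using \<open>p \<noteq> K+1\<close> by simp
  then show "2*K + (if 0 < m then 1 else 0) \<le> card G" using L K by simp
qed

lemma gD_lower:
  assumes K: "2 \<le> K" shows "2*K - 1 + (if 0 < m then 1 else 0) \<le> gamma (Dn K m)"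
proof (rule gamma_ge)
  fix G assume A0: "is_string_attractor (Dn K m) G"
  note A = A0[unfolded Dn_def]
  have fin: "finite G" using attr_finite[OF A0] .
  have W1: "\<forall>x<2*K. (\<lambda>_. 0::nat) x \<le> 2" by simp
  have W2: "\<forall>x<2*K. (\<lambda>_. 0::nat) x = 1 \<longrightarrow> x+1 < 2*K \<and> (\<lambda>_. 0::nat) (x+1) \<noteq> 0" by simp
  have L: "card (G \<inter> {..<2*K}) + 2*(K-1) + (if 0 < m then 1 else 0) \<le> card G"
    by (rule lower_generic[OF A refl K W1 W2])
  obtain p where p: "p \<in> G" "p < 2*K"
  proof -
    have "2*K \<le> 2*K+(K-1)*(K+2)+m" by (rule le_trans[OF le_add1 le_add1])
    moreover have "K \<le> 2*K" by simp
    moreover have "\<forall>t<K. (\<lambda>_. 0::nat) t = 0" by simp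
    ultimately have "\<exists>p\<in>G. p < 2*K \<and> (\<lambda>_. 0::nat) p = 0" by (rule arun_hit[OF A _ K])
    then show ?thesis using that by blast
  qed
  then have "card {p} \<le> card (G \<inter> {..<2*K})" using fin by (intro card_mono) auto
  then show "2*K - 1 + (if 0 < m then 1 else 0) \<le> card G" using L K by simp
qed

lemma map_split: "k < n \<Longrightarrow> map f [0..<n] = map f [0..<k] @ f k # map f [Suc k..<n]"
proof -
  assume k: "k < n"
  have "[0..<n] = [0..<k] @ [k..<n]" using upt_add_eq_append[of 0 k "n-k"] k by simp
  also have "[k..<n] = k # [Suc k..<n]" using k by (simp add: upt_conv_Cons)
  finally show ?thesis by simp
qed

lemma blk_indep: "B \<le> x \<Longrightarrow> blk K B w x = blk K B w' x"
  by (simp add: blk_def)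

lemma blk_shift: assumes "B \<le> x" shows "blk K (Suc B) w (Suc x) = blk K B w' x"
proof -
  have h1: "(Suc x < Suc B) = False" "(x < B) = False" using assms by auto
  have h3: "Suc x - Suc B = x - B" by simp
  show ?thesis unfolding blk_def by (simp only: h1 h3 if_False)
qed

lemma ed_one: assumes "ed xs ys \<le> 1" "xs \<noteq> ys" shows "ed xs ys = 1"
proof -
  have "ed xs ys \<noteq> 0" using ed_zero assms(2) by blast
  then show ?thesis using assms(1) by linarith
qed

lemma map_split2: "k \<le> n \<Longrightarrow> map f [0..<n] = map f [0..<k] @ map f [k..<n]"
proof -
  assume k: "k \<le> n"
  have "[0..<k + (n-k)] = [0..<k] @ [k..<k + (n-k)]" by (rule upt_add_eq_append) simp
  then show ?thesis using k by simp
qed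

lemma ed_TS: assumes K: "2 \<le> K" shows "ed (Tn K m) (Sn K m) = 1"
proof -
  define n where "n = 2*K+1+(K-1)*(K+2)+m"
  let ?n = n
  let ?fT = "blk K (2*K+1) (wT K)" and ?fS = "blk K (2*K+1) (wS K)"
  have Kn: "K < ?n" by (simp add: n_def)
  have T: "Tn K m = map ?fT [0..<K] @ ?fT K # map ?fT [Suc K..<?n]"
    unfolding Tn_def n_def[symmetric] by (rule map_split[OF Kn])
  have S: "Sn K m = map ?fS [0..<K] @ ?fS K # map ?fS [Suc K..<?n]"
    unfolding Sn_def n_def[symmetric] by (rule map_split[OF Kn])
  have u: "map ?fS [0..<K] = map ?fT [0..<K]"
    by (rule map_cong) (auto simp: blk_W wT_def wS_def)
  have v: "map ?fS [Suc K..<?n] = map ?fT [Suc K..<?n]"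
  proof (rule map_cong)
    fix x assume "x \<in> set [Suc K..<?n]"
    then have x: "K < x" by simp
    show "?fS x = ?fT x"
    proof (cases "x < 2*K+1")
      case True then show ?thesis using x by (simp add: blk_W wT_def wS_def)
    next
      case False then show ?thesis by (intro blk_indep) simp
    qed
  qed simp
  have a: "?fT K = 1" "?fS K = 2" by (simp_all add: blk_W wT_def wS_def)
  have "ed (Tn K m) (Sn K m) \<le> 1"
    unfolding T S u v a by (rule le_trans[OF ed_prefix ed_sub1])
  moreover have "Tn K m \<noteq> Sn K m" unfolding T S u v a by simp
  ultimately show ?thesis by (rule ed_one)
qed

lemma ed_TI: assumes K: "2 \<le> K" shows "ed (Tn K m) (In K m) = 1"
proof -
  define n where "n = 2*K+1+(K-1)*(K+2)+m"
  let ?n = n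
  let ?fT = "blk K (2*K+1) (wT K)" and ?fI = "blk K (2*K+2) (wI K)"
  have n1: "2*K+2+(K-1)*(K+2)+m = Suc ?n" by (simp add: n_def)
  have Kn: "K+1 < Suc ?n" by (simp add: n_def)
  have T: "Tn K m = map ?fT [0..<K+1] @ map ?fT [K+1..<?n]"
    unfolding Tn_def n_def[symmetric] by (rule map_split2) (simp add: n_def)
  have I: "In K m = map ?fI [0..<K+1] @ ?fI (K+1) # map ?fI [Suc (K+1)..<Suc ?n]"
    unfolding In_def n1 by (rule map_split[OF Kn])
  have u: "map ?fI [0..<K+1] = map ?fT [0..<K+1]"
    by (rule map_cong) (auto simp: blk_W wT_def wI_def)
  have v: "map ?fI [Suc (K+1)..<Suc ?n] = map ?fT [K+1..<?n]"
  proof -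
    have "[Suc (K+1)..<Suc ?n] = map Suc [K+1..<?n]" by (simp add: map_Suc_upt)
    then have "map ?fI [Suc (K+1)..<Suc ?n] = map (\<lambda>x. ?fI (Suc x)) [K+1..<?n]" by simp
    also have "\<dots> = map ?fT [K+1..<?n]"
    proof (rule map_cong)
      fix x assume "x \<in> set [K+1..<?n]"
      then have x: "K < x" by simp
      show "?fI (Suc x) = ?fT x"
      proof (cases "x < 2*K+1")
        case True then show ?thesis using x by (simp add: blk_W wT_def wI_def)
      next
        case False
        have "blk K (Suc (2*K+1)) (wI K) (Suc x) = ?fT x" by (rule blk_shift) (use False in simp)
        then show ?thesis by (simp add: numeral_2_eq_2)
      qed
    qed simp
    finally show ?thesis .
  qed
  have a: "?fI (K+1) = 2" by (simp add: blk_W wI_def)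
  have "ed (Tn K m) (In K m) \<le> 1"
    unfolding T I u v a by (rule le_trans[OF ed_prefix ed_ins1])
  moreover have "Tn K m \<noteq> In K m" using len_Tn[of K m] len_In[of K m] by auto
  ultimately show ?thesis by (rule ed_one)
qed

lemma ed_TD: assumes K: "2 \<le> K" shows "ed (Tn K m) (Dn K m) = 1"
proof -
  define n where "n = 2*K+1+(K-1)*(K+2)+m"
  define n' where "n' = 2*K+(K-1)*(K+2)+m"
  let ?n = n and ?n1 = n'
  let ?fT = "blk K (2*K+1) (wT K)" and ?fD = "blk K (2*K) (\<lambda>_. 0)"
  have n1: "?n = Suc ?n1" by (simp add: n_def n'_def)
  have Kn: "K < ?n" by (simp add: n_def)
  have T: "Tn K m = map ?fT [0..<K] @ ?fT K # map ?fT [Suc K..<?n]"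
    unfolding Tn_def n_def[symmetric] by (rule map_split[OF Kn])
  have D: "Dn K m = map ?fD [0..<K] @ map ?fD [K..<?n1]"
    unfolding Dn_def n'_def[symmetric] by (rule map_split2) (simp add: n'_def)
  have u: "map ?fD [0..<K] = map ?fT [0..<K]"
    by (rule map_cong) (auto simp: blk_W wT_def)
  have v: "map ?fT [Suc K..<?n] = map ?fD [K..<?n1]"
  proof -
    have "[Suc K..<?n] = map Suc [K..<?n1]" unfolding n1 by (simp add: map_Suc_upt)
    then have "map ?fT [Suc K..<?n] = map (\<lambda>x. ?fT (Suc x)) [K..<?n1]" by simp
    also have "\<dots> = map ?fD [K..<?n1]"
    proof (rule map_cong)
      fix x assume "x \<in> set [K..<?n1]"
      then have x: "K \<le> x" by simp
      show "?fT (Suc x) = ?fD x"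
      proof (cases "x < 2*K")
        case True then show ?thesis using x by (simp add: blk_W wT_def)
      next
        case False
        have "blk K (Suc (2*K)) (wT K) (Suc x) = ?fD x" by (rule blk_shift) (use False in simp)
        then show ?thesis by simp
      qed
    qed simp
    finally show ?thesis .
  qed
  have a: "?fT K = 1" by (simp add: blk_W wT_def)
  have "ed (Tn K m) (Dn K m) \<le> 1"
    unfolding T D u v a by (rule le_trans[OF ed_prefix ed_del1])
  moreover have "Tn K m \<noteq> Dn K m" using len_Tn[of K m] len_Dn[of K m] by auto
  ultimately show ?thesis by (rule ed_one)
qed

definition base :: "nat \<Rightarrow> nat" where "base K = 2*K+1+(K-1)*(K+2)"

lemma fam:
  assumes K: "2 \<le> K" and n: "base K < n"
  shows "length (Tn K (n - base K)) = n" "length (Sn K (n - base K)) = n"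
    "length (In K (n - base K)) = n + 1" "length (Dn K (n - base K)) + 1 = n" "0 < n - base K"
  using n len_Tn[of K "n - base K"] len_Sn[of K "n - base K"] len_In[of K "n - base K"]
    len_Dn[of K "n - base K"] unfolding base_def by simp_all

lemma ratio_le_num: "real a / real b \<le> real a"
proof (cases "b = 0")
  case False
  then have "1 \<le> real b" by simp
  then show ?thesis by (simp add: divide_le_eq mult_le_cancel_left1 less_le_trans[OF zero_less_one])
qed simp

lemma ratio_ge:
  assumes "L \<le> a" "0 < b" "b \<le> U"
  shows "real L / real U \<le> real a / real b"
proof -
  have "real L / real U \<le> real a / real U" using assms by (simp add: divide_right_mono)
  also have "\<dots> \<le> real a / real b" using assms by (intro divide_left_mono) auto
  finally show ?thesis .
qed

lemma sup_ge:
  fixes S :: "real set"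
  assumes "x \<in> S" "\<And>y. y \<in> S \<Longrightarrow> y \<le> b"
  shows "x \<le> Sup S"
  by (rule cSup_upper[OF assms(1)]) (rule bdd_aboveI, rule assms(2))

lemma MS_all:
  assumes K: "2 \<le> K" and n: "base K < n"
  shows "real (2*K) / real (K+2) \<le> MS_sub (gamma :: nat list \<Rightarrow> nat) n"
    "real (2*K) / real (K+2) \<le> MS_ins (gamma :: nat list \<Rightarrow> nat) n"
    "real (2*K) / real (K+2) \<le> MS_del (gamma :: nat list \<Rightarrow> nat) n"
proof -
  let ?m = "n - base K"
  note F = fam[OF K n]
  have m: "0 < ?m" using F by simp
  have gT: "0 < gamma (Tn K ?m)" "gamma (Tn K ?m) \<le> K+2"
    using gT_lower[OF K, of ?m] gT_upper[OF K, of ?m] K m by simp_all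
  have gS: "2*K \<le> gamma (Sn K ?m)" using gS_lower[OF K, of ?m] by simp
  have gI: "2*K \<le> gamma (In K ?m)" using gI_lower[OF K, of ?m] by simp
  have gD: "2*K \<le> gamma (Dn K ?m)" using gD_lower[OF K, of ?m] m K by simp
  show "real (2*K) / real (K+2) \<le> MS_sub (gamma :: nat list \<Rightarrow> nat) n"
    unfolding MS_sub_def
  proof (rule order.trans[OF _ sup_ge])
    show "real (2*K) / real (K+2) \<le> real (gamma (Sn K ?m)) / real (gamma (Tn K ?m))"
      by (rule ratio_ge[OF gS gT])
    show "real (gamma (Sn K ?m)) / real (gamma (Tn K ?m)) \<in> {real (gamma T') / real (gamma (T :: nat list)) |T T'.
       length T = n \<and> length T' = n \<and> ed T T' = 1}"
      using F(1,2) ed_TS[OF K, of "n - base K"] by blast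
    fix y assume "y \<in> {real (gamma T') / real (gamma (T :: nat list)) |T T'.
       length T = n \<and> length T' = n \<and> ed T T' = 1}"
    then obtain T T' :: "nat list" where "y = real (gamma T') / real (gamma T)" "length T' = n" by blast
    then show "y \<le> real n" using ratio_le_num[of "gamma T'" "gamma T"] gamma_le_length[of T'] by simp
  qed
  show "real (2*K) / real (K+2) \<le> MS_ins (gamma :: nat list \<Rightarrow> nat) n"
    unfolding MS_ins_def
  proof (rule order.trans[OF _ sup_ge])
    show "real (2*K) / real (K+2) \<le> real (gamma (In K ?m)) / real (gamma (Tn K ?m))"
      by (rule ratio_ge[OF gI gT])
    show "real (gamma (In K ?m)) / real (gamma (Tn K ?m)) \<in> {real (gamma T') / real (gamma (T :: nat list)) |T T'.
       length T = n \<and> length T' = n + 1 \<and> ed T T' = 1}"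
      using F(1,3) ed_TI[OF K, of "n - base K"] by blast
    fix y assume "y \<in> {real (gamma T') / real (gamma (T :: nat list)) |T T'.
       length T = n \<and> length T' = n + 1 \<and> ed T T' = 1}"
    then obtain T T' :: "nat list" where "y = real (gamma T') / real (gamma T)" "length T' = n + 1" by blast
    then show "y \<le> real (n + 1)" using ratio_le_num[of "gamma T'" "gamma T"] gamma_le_length[of T'] by simp
  qed
  show "real (2*K) / real (K+2) \<le> MS_del (gamma :: nat list \<Rightarrow> nat) n"
    unfolding MS_del_def
  proof (rule order.trans[OF _ sup_ge])
    show "real (2*K) / real (K+2) \<le> real (gamma (Dn K ?m)) / real (gamma (Tn K ?m))"
      by (rule ratio_ge[OF gD gT])
    show "real (gamma (Dn K ?m)) / real (gamma (Tn K ?m)) \<in> {real (gamma T') / real (gamma (T :: nat list)) |T T'.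
       length T = n \<and> length T' + 1 = n \<and> ed T T' = 1}"
      using F(1,4) ed_TD[OF K, of "n - base K"] by blast
    fix y assume "y \<in> {real (gamma T') / real (gamma (T :: nat list)) |T T'.
       length T = n \<and> length T' + 1 = n \<and> ed T T' = 1}"
    then obtain T T' :: "nat list" where "y = real (gamma T') / real (gamma T)" "length T' + 1 = n" by blast
    then show "y \<le> real n" using ratio_le_num[of "gamma T'" "gamma T"] gamma_le_length[of T'] by simp
  qed
qed

lemma AS_all:
  assumes K: "2 \<le> K" and n: "base K < n"
  shows "real K - 2 \<le> AS_sub (gamma :: nat list \<Rightarrow> nat) n"
    "real K - 2 \<le> AS_ins (gamma :: nat list \<Rightarrow> nat) n"
    "real K - 2 \<le> AS_del (gamma :: nat list \<Rightarrow> nat) n"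
proof -
  let ?m = "n - base K"
  note F = fam[OF K n]
  have m: "0 < ?m" using F by simp
  have gT: "gamma (Tn K ?m) \<le> K+2"
    using gT_upper[OF K, of ?m] m by simp
  have gS: "2*K \<le> gamma (Sn K ?m)" using gS_lower[OF K, of ?m] by simp
  have gI: "2*K \<le> gamma (In K ?m)" using gI_lower[OF K, of ?m] by simp
  have gD: "2*K \<le> gamma (Dn K ?m)" using gD_lower[OF K, of ?m] m K by simp
  show "real K - 2 \<le> AS_sub (gamma :: nat list \<Rightarrow> nat) n"
    unfolding AS_sub_def
  proof (rule order.trans[OF _ sup_ge])
    show "real K - 2 \<le> real (gamma (Sn K ?m)) - real (gamma (Tn K ?m))" using gS gT by linarith
    show "real (gamma (Sn K ?m)) - real (gamma (Tn K ?m)) \<in> {real (gamma T') - real (gamma (T :: nat list)) |T T'.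
       length T = n \<and> length T' = n \<and> ed T T' = 1}"
      using F(1,2) ed_TS[OF K, of "n - base K"] by blast
    fix y assume "y \<in> {real (gamma T') - real (gamma (T :: nat list)) |T T'.
       length T = n \<and> length T' = n \<and> ed T T' = 1}"
    then obtain T T' :: "nat list" where "y = real (gamma T') - real (gamma T)" "length T' = n" by blast
    then show "y \<le> real n" using gamma_le_length[of T'] by simp
  qed
  show "real K - 2 \<le> AS_ins (gamma :: nat list \<Rightarrow> nat) n"
    unfolding AS_ins_def
  proof (rule order.trans[OF _ sup_ge])
    show "real K - 2 \<le> real (gamma (In K ?m)) - real (gamma (Tn K ?m))" using gI gT by linarith
    show "real (gamma (In K ?m)) - real (gamma (Tn K ?m)) \<in> {real (gamma T') - real (gamma (T :: nat list)) |T T'.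
       length T = n \<and> length T' = n + 1 \<and> ed T T' = 1}"
      using F(1,3) ed_TI[OF K, of "n - base K"] by blast
    fix y assume "y \<in> {real (gamma T') - real (gamma (T :: nat list)) |T T'.
       length T = n \<and> length T' = n + 1 \<and> ed T T' = 1}"
    then obtain T T' :: "nat list" where "y = real (gamma T') - real (gamma T)" "length T' = n + 1" by blast
    then show "y \<le> real (n + 1)" using gamma_le_length[of T'] by simp
  qed
  show "real K - 2 \<le> AS_del (gamma :: nat list \<Rightarrow> nat) n"
    unfolding AS_del_def
  proof (rule order.trans[OF _ sup_ge])
    show "real K - 2 \<le> real (gamma (Dn K ?m)) - real (gamma (Tn K ?m))" using gD gT by linarith
    show "real (gamma (Dn K ?m)) - real (gamma (Tn K ?m)) \<in> {real (gamma T') - real (gamma (T :: nat list)) |T T'.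
       length T = n \<and> length T' + 1 = n \<and> ed T T' = 1}"
      using F(1,4) ed_TD[OF K, of "n - base K"] by blast
    fix y assume "y \<in> {real (gamma T') - real (gamma (T :: nat list)) |T T'.
       length T = n \<and> length T' + 1 = n \<and> ed T T' = 1}"
    then obtain T T' :: "nat list" where "y = real (gamma T') - real (gamma T)" "length T' + 1 = n" by blast
    then show "y \<le> real n" using gamma_le_length[of T'] by simp
  qed
qed

lemma choose_K:
  fixes r :: real assumes r: "r < 2"
  shows "\<exists>K\<ge>2. r < real (2*K) / real (K+2)"
proof -
  obtain K0 :: nat where K0: "4 / (2 - r) < real K0" using reals_Archimedean2 by blast
  define K where "K = K0 + 2"
  have pos: "0 < 2 - r" using r by simp
  have "4 < (2 - r) * real K0" using K0 pos by (simp add: divide_less_eq mult.commute)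
  also have "\<dots> \<le> (2 - r) * (real K + 2)" using pos unfolding K_def by (intro mult_left_mono) auto
  finally have "4 < (2 - r) * (real K + 2)" .
  then have "r * (real K + 2) < 2 * real K" by (simp add: algebra_simps)
  then have "r < 2 * real K / (real K + 2)" by (simp add: field_simps)
  then show ?thesis unfolding K_def by (intro exI[of _ "K0+2"]) (simp add: add.commute)
qed

lemma liminf_ge2:
  assumes "\<And>r. r < 2 \<Longrightarrow> eventually (\<lambda>n. r < f n) sequentially"
  shows "2 \<le> liminf (\<lambda>n. ereal (f n))"
  unfolding le_Liminf_iff
proof (intro allI impI)
  fix y :: ereal assume y: "y < 2"
  show "eventually (\<lambda>n. y < ereal (f n)) sequentially"
  proof (cases y)
    case (real r)
    then have "r < 2" using y by simp
    then show ?thesis using assms[of r] real by (auto elim: eventually_mono)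
  next
    case PInf then show ?thesis using y by simp
  next
    case MInf then show ?thesis by simp
  qed
qed

lemma MS_ev:
  fixes r :: real assumes r: "r < 2"
  shows "eventually (\<lambda>n. r < MS_sub (gamma :: nat list \<Rightarrow> nat) n) sequentially"
    "eventually (\<lambda>n. r < MS_ins (gamma :: nat list \<Rightarrow> nat) n) sequentially"
    "eventually (\<lambda>n. r < MS_del (gamma :: nat list \<Rightarrow> nat) n) sequentially"
proof -
  obtain K where K: "2 \<le> K" "r < real (2*K) / real (K+2)" using choose_K[OF r] by blast
  have ev: "eventually (\<lambda>n. base K < n) sequentially"
    by (rule eventually_sequentiallyI[of "Suc (base K)"]) simp
  show "eventually (\<lambda>n. r < MS_sub (gamma :: nat list \<Rightarrow> nat) n) sequentially"
    using ev by (rule eventually_mono) (use MS_all(1)[OF K(1)] K(2) in force)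
  show "eventually (\<lambda>n. r < MS_ins (gamma :: nat list \<Rightarrow> nat) n) sequentially"
    using ev by (rule eventually_mono) (use MS_all(2)[OF K(1)] K(2) in force)
  show "eventually (\<lambda>n. r < MS_del (gamma :: nat list \<Rightarrow> nat) n) sequentially"
    using ev by (rule eventually_mono) (use MS_all(3)[OF K(1)] K(2) in force)
qed

lemma base_lt: "1 \<le> K \<Longrightarrow> base K < (K+2)*(K+2)"
proof -
  assume "1 \<le> K"
  then obtain j where j: "K = j + 1" by (metis add.commute le_Suc_ex)
  show ?thesis unfolding base_def j by (simp add: algebra_simps)
qed

lemma choose_sqrt:
  assumes n: "144 \<le> n"
  shows "\<exists>K\<ge>2. base K < n \<and> sqrt (real n) / 2 \<le> real K - 2"
proof -
  define s where "s = nat \<lfloor>sqrt (real n)\<rfloor>"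
  have s1: "real s \<le> sqrt (real n)" unfolding s_def by simp
  have s2: "sqrt (real n) < real s + 1" unfolding s_def by linarith
  have "sqrt (144::real) \<le> sqrt (real n)" by (rule real_sqrt_le_mono) (use n in simp)
  moreover have "sqrt (144::real) = 12" by (simp add: real_sqrt_unique[of 12])
  ultimately have sq12: "12 \<le> sqrt (real n)" by linarith
  then have s12: "11 < real s" using s2 by simp
  then have s12n: "11 < s" by simp
  define K where "K = s - 3"
  have K2: "2 \<le> K" using s12n K_def by simp
  have "(K+2)*(K+2) \<le> s*s" unfolding K_def using s12n by (intro mult_mono) auto
  moreover have "real (s*s) \<le> real n"
  proof -
    have "real s * real s \<le> sqrt (real n) * sqrt (real n)" using s1 by (intro mult_mono) auto
    then show ?thesis by simp
  qed
  ultimately have "(K+2)*(K+2) \<le> n" by linarith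
  then have "base K < n" using base_lt[of K] K2 by simp
  moreover have "sqrt (real n) / 2 \<le> real K - 2"
  proof -
    have "real K = real s - 3" unfolding K_def using s12n by simp
    then show ?thesis using s2 sq12 by simp
  qed
  ultimately show ?thesis using K2 by blast
qed

lemma AS_ev:
  shows "\<exists>c>0. \<forall>\<^sub>F n in sequentially. AS_sub (gamma :: nat list \<Rightarrow> nat) n \<ge> c * sqrt (real n)"
    "\<exists>c>0. \<forall>\<^sub>F n in sequentially. AS_ins (gamma :: nat list \<Rightarrow> nat) n \<ge> c * sqrt (real n)"
    "\<exists>c>0. \<forall>\<^sub>F n in sequentially. AS_del (gamma :: nat list \<Rightarrow> nat) n \<ge> c * sqrt (real n)"
proof -
  have ev: "eventually (\<lambda>n. (144::nat) \<le> n) sequentially" by (rule eventually_ge_at_top)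
  have key: "\<And>n. 144 \<le> n \<Longrightarrow> (1/2) * sqrt (real n) \<le> AS_sub (gamma :: nat list \<Rightarrow> nat) n \<and>
     (1/2) * sqrt (real n) \<le> AS_ins (gamma :: nat list \<Rightarrow> nat) n \<and>
     (1/2) * sqrt (real n) \<le> AS_del (gamma :: nat list \<Rightarrow> nat) n"
  proof -
    fix n :: nat assume "144 \<le> n"
    then obtain K where K: "2 \<le> K" "base K < n" "sqrt (real n) / 2 \<le> real K - 2"
      using choose_sqrt by blast
    show "?thesis n" using AS_all[OF K(1,2)] K(3) by simp
  qed
  show "\<exists>c>0. \<forall>\<^sub>F n in sequentially. AS_sub (gamma :: nat list \<Rightarrow> nat) n \<ge> c * sqrt (real n)"
  proof (intro exI[of _ "1/2"] conjI)
    show "(0::real) < 1/2" by simp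
    show "\<forall>\<^sub>F n in sequentially. AS_sub (gamma :: nat list \<Rightarrow> nat) n \<ge> 1/2 * sqrt (real n)"
      using ev by (rule eventually_mono) (blast dest: key)
  qed
  show "\<exists>c>0. \<forall>\<^sub>F n in sequentially. AS_ins (gamma :: nat list \<Rightarrow> nat) n \<ge> c * sqrt (real n)"
  proof (intro exI[of _ "1/2"] conjI)
    show "(0::real) < 1/2" by simp
    show "\<forall>\<^sub>F n in sequentially. AS_ins (gamma :: nat list \<Rightarrow> nat) n \<ge> 1/2 * sqrt (real n)"
      using ev by (rule eventually_mono) (blast dest: key)
  qed
  show "\<exists>c>0. \<forall>\<^sub>F n in sequentially. AS_del (gamma :: nat list \<Rightarrow> nat) n \<ge> c * sqrt (real n)"
  proof (intro exI[of _ "1/2"] conjI)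
    show "(0::real) < 1/2" by simp
    show "\<forall>\<^sub>F n in sequentially. AS_del (gamma :: nat list \<Rightarrow> nat) n \<ge> 1/2 * sqrt (real n)"
      using ev by (rule eventually_mono) (blast dest: key)
  qed
qed

lemma forall_parts:
  shows "\<forall>M. \<exists>T T' :: nat list. gamma T \<ge> M \<and> length T' = length T \<and> ed T T' = 1 \<and>
        int (gamma T') - int (gamma T) \<ge> int (gamma T) - 2"
    "\<forall>M. \<exists>T T' :: nat list. gamma T \<ge> M \<and> length T' = length T + 1 \<and> ed T T' = 1 \<and>
        int (gamma T') - int (gamma T) \<ge> int (gamma T) - 2"
    "\<forall>M. \<exists>T T' :: nat list. gamma T \<ge> M \<and> length T' + 1 = length T \<and> ed T T' = 1 \<and>
        int (gamma T') - int (gamma T) \<ge> int (gamma T) - 3"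
proof -
  {
    fix M :: nat
    define K where "K = M + 2"
    have K: "2 \<le> K" unfolding K_def by simp
    have lo: "M \<le> gamma (Tn K 0)" using gT_lower[OF K, of 0] unfolding K_def by simp
    have up: "gamma (Tn K 0) \<le> K + 1" using gT_upper[OF K, of 0] by simp
    have s: "2*K \<le> gamma (Sn K 0)" using gS_lower[OF K, of 0] by simp
    have i: "2*K \<le> gamma (In K 0)" using gI_lower[OF K, of 0] by simp
    have d: "2*K - 1 \<le> gamma (Dn K 0)" using gD_lower[OF K, of 0] by simp
    have "\<exists>T T' :: nat list. gamma T \<ge> M \<and> length T' = length T \<and> ed T T' = 1 \<and>
        int (gamma T') - int (gamma T) \<ge> int (gamma T) - 2"
      using lo up s ed_TS[OF K, of 0] len_Tn[of K 0] len_Sn[of K 0]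
      by (intro exI[of _ "Tn K 0"] exI[of _ "Sn K 0"]) simp
    moreover have "\<exists>T T' :: nat list. gamma T \<ge> M \<and> length T' = length T + 1 \<and> ed T T' = 1 \<and>
        int (gamma T') - int (gamma T) \<ge> int (gamma T) - 2"
      using lo up i ed_TI[OF K, of 0] len_Tn[of K 0] len_In[of K 0]
      by (intro exI[of _ "Tn K 0"] exI[of _ "In K 0"]) simp
    moreover have "\<exists>T T' :: nat list. gamma T \<ge> M \<and> length T' + 1 = length T \<and> ed T T' = 1 \<and>
        int (gamma T') - int (gamma T) \<ge> int (gamma T) - 3"
      using lo up d K ed_TD[OF K, of 0] len_Tn[of K 0] len_Dn[of K 0]
      by (intro exI[of _ "Tn K 0"] exI[of _ "Dn K 0"]) simp
    ultimately have "(\<exists>T T' :: nat list. gamma T \<ge> M \<and> length T' = length T \<and> ed T T' = 1 \<and>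
        int (gamma T') - int (gamma T) \<ge> int (gamma T) - 2) \<and>
      (\<exists>T T' :: nat list. gamma T \<ge> M \<and> length T' = length T + 1 \<and> ed T T' = 1 \<and>
        int (gamma T') - int (gamma T) \<ge> int (gamma T) - 2) \<and>
      (\<exists>T T' :: nat list. gamma T \<ge> M \<and> length T' + 1 = length T \<and> ed T T' = 1 \<and>
        int (gamma T') - int (gamma T) \<ge> int (gamma T) - 3)" by blast
  }
  then show "\<forall>M. \<exists>T T' :: nat list. gamma T \<ge> M \<and> length T' = length T \<and> ed T T' = 1 \<and>
        int (gamma T') - int (gamma T) \<ge> int (gamma T) - 2"
    "\<forall>M. \<exists>T T' :: nat list. gamma T \<ge> M \<and> length T' = length T + 1 \<and> ed T T' = 1 \<and>
        int (gamma T') - int (gamma T) \<ge> int (gamma T) - 2"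
    "\<forall>M. \<exists>T T' :: nat list. gamma T \<ge> M \<and> length T' + 1 = length T \<and> ed T T' = 1 \<and>
        int (gamma T') - int (gamma T) \<ge> int (gamma T) - 3" by blast+
qed

theorem mainTheorem3:
  shows
  "liminf (\<lambda>n. (ereal :: real \<Rightarrow> ereal) (MS_sub (gamma :: nat list \<Rightarrow> nat) n)) \<ge> 2 \<and>
   (\<forall>m. \<exists>T T' :: nat list. gamma T \<ge> m \<and> length T' = length T \<and> ed T T' = 1 \<and>
        int (gamma T') - int (gamma T) \<ge> int (gamma T) - 2) \<and>
   (\<exists>c>0. \<forall>\<^sub>F n in sequentially. AS_sub (gamma :: nat list \<Rightarrow> nat) n \<ge> c * sqrt (real n)) \<and>
   liminf (\<lambda>n. (ereal :: real \<Rightarrow> ereal) (MS_ins (gamma :: nat list \<Rightarrow> nat) n)) \<ge> 2 \<and>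
   (\<forall>m. \<exists>T T' :: nat list. gamma T \<ge> m \<and> length T' = length T + 1 \<and> ed T T' = 1 \<and>
        int (gamma T') - int (gamma T) \<ge> int (gamma T) - 2) \<and>
   (\<exists>c>0. \<forall>\<^sub>F n in sequentially. AS_ins (gamma :: nat list \<Rightarrow> nat) n \<ge> c * sqrt (real n)) \<and>
   liminf (\<lambda>n. (ereal :: real \<Rightarrow> ereal) (MS_del (gamma :: nat list \<Rightarrow> nat) n)) \<ge> 2 \<and>
   (\<forall>m. \<exists>T T' :: nat list. gamma T \<ge> m \<and> length T' + 1 = length T \<and> ed T T' = 1 \<and>
        int (gamma T') - int (gamma T) \<ge> int (gamma T) - 3) \<and>
   (\<exists>c>0. \<forall>\<^sub>F n in sequentially. AS_del (gamma :: nat list \<Rightarrow> nat) n \<ge> c * sqrt (real n))"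
  using liminf_ge2[OF MS_ev(1)] liminf_ge2[OF MS_ev(2)] liminf_ge2[OF MS_ev(3)]
    forall_parts AS_ev by blast

end
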